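(* Let $n$ and $t$ be positive integers with $t\le n$, and let $G_{n,t}$ be the subgroup of the group $(\mathcal{P}[n],\triangle)$ generated by the sets $g_1,g_2,\ldots,g_t\subseteq[n]$ constructed below. Then (i) $|G_{n,t}|=2^t$; and (ii) every non-zero (i.e. non-empty) element of $G_{n,t}$ intersects every cyclic translate modulo $n$ of $[t]$, that is, every set of the form $\{s+1,s+2,\ldots,s+t\}$ with $s\in\mathbb{Z}$, where each element is replaced by its representative in $[n]=\{1,\ldots,n\}$ modulo $n$.
   Context: $\mathcal{P}[n]$ denotes the power set of $[n]=\{1,2,\ldots,n\}$, which is an abelian group under symmetric difference $A\triangle B=(A\setminus B)\cup(B\setminus A)$, with identity (zero) the empty set. For integers $y$ and $z>0$, $[y]_z$ denotes the least strictly positive residue of $y$ modulo $z$ (so $[y]_z\in\{1,\ldots,z\}$). Construction. Apply Euclid's algorithm to $n$ and $t$: set $r_{-1}=n$, $r_0=t$, and for $i\ge1$ write $r_{i-2}=q_ir_{i-1}+r_i$ with $0\le r_i<r_{i-1}$, stopping at the first index $k\ge1$ with $r_k=0$. Thus $n=q_1t+r_1$, $t=q_2r_1+r_2$, $r_1=q_3r_2+r_3$, $\ldots$, $r_{k-2}=q_kr_{k-1}$, with $t>r_1>\cdots>r_{k-1}>0$. Define partial sums $n_m=q_1t+q_3r_2+\cdots+q_{2m-1}r_{2m-2}$ (for $m\ge0$ with $2m-1\le k$) and $t_m=q_2r_1+q_4r_3+\cdots+q_{2m}r_{2m-1}$ (for $m\ge0$ with $2m\le k$), with $n_0=t_0=0$.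 (Then $n=n_m+r_{2m-1}$ and $t=t_m+r_{2m}$.) Fix $i$ with $1\le i\le t$, and let $a$ be maximal (among indices for which $t_a$ is defined) with $t_a<i$. For $0\le j\le a$ set $g_i^{(j)}=\{x\in(n_j,n_{j+1}]\cap\mathbb{Z}: x-n_j\equiv i-t_j \pmod{r_{2j}}\}$, and set $g_i^{(a+1)}=\{n_{a+1}+[i-t_a]_{r_{2a+1}}\}$ if $k\ne 2a+1$, and $g_i^{(a+1)}=\emptyset$ if $k=2a+1$. Finally let $g_i=\bigcup_{j=0}^{a+1}g_i^{(j)}\subseteq[n]$. *)

theory Defs
  imports Main "HOL-Algebra.Generated_Groups"
begin

text \<open>Euclid's algorithm on n and t. eu n t 0 = r_{-1} = n, eu n t (i+1) = r_i.\<close>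
fun eu :: "nat \<Rightarrow> nat \<Rightarrow> nat \<Rightarrow> nat" where
  "eu n t 0 = n"
| "eu n t (Suc 0) = t"
| "eu n t (Suc (Suc i)) = eu n t i mod eu n t (Suc i)"

definition rem :: "nat \<Rightarrow> nat \<Rightarrow> nat \<Rightarrow> nat" where
  "rem n t i = eu n t (Suc i)"

text \<open>q_i for i >= 1: r_{i-2} = q_i r_{i-1} + r_i\<close>
definition quo :: "nat \<Rightarrow> nat \<Rightarrow> nat \<Rightarrow> nat" where
  "quo n t i = eu n t (i - 1) div eu n t i"

definition euk :: "nat \<Rightarrow> nat \<Rightarrow> nat" where
  "euk n t = (LEAST k. 1 \<le> k \<and> rem n t k = 0)"

definition nn :: "nat \<Rightarrow> nat \<Rightarrow> nat \<Rightarrow> nat" where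
  "nn n t m = (\<Sum>j=1..m. quo n t (2*j - 1) * rem n t (2*j - 2))"

definition tt :: "nat \<Rightarrow> nat \<Rightarrow> nat \<Rightarrow> nat" where
  "tt n t m = (\<Sum>j=1..m. quo n t (2*j) * rem n t (2*j - 1))"

text \<open>a: maximal index with t_a defined (2a <= k) and t_a < i\<close>
definition aa :: "nat \<Rightarrow> nat \<Rightarrow> nat \<Rightarrow> nat" where
  "aa n t i = (GREATEST a. 2*a \<le> euk n t \<and> tt n t a < i)"

text \<open>least strictly positive residue [y]_z\<close>
definition lpr :: "int \<Rightarrow> int \<Rightarrow> int" where
  "lpr y z = (y - 1) mod z + 1"

definition gpart :: "nat \<Rightarrow> nat \<Rightarrow> nat \<Rightarrow> nat \<Rightarrow> nat set" where
  "gpart n t i j = {x. nn n t j < x \<and> x \<le> nn n t (Suc j) \<and>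
      (int x - int (nn n t j)) mod int (rem n t (2*j)) = (int i - int (tt n t j)) mod int (rem n t (2*j))}"

definition gtop :: "nat \<Rightarrow> nat \<Rightarrow> nat \<Rightarrow> nat set" where
  "gtop n t i = (let a = aa n t i in
     if euk n t = 2*a + 1 then {}
     else {nat (int (nn n t (Suc a)) + lpr (int i - int (tt n t a)) (int (rem n t (2*a + 1))))})"

definition gset :: "nat \<Rightarrow> nat \<Rightarrow> nat \<Rightarrow> nat set" where
  "gset n t i = (\<Union>j\<le>aa n t i. gpart n t i j) \<union> gtop n t i"

definition PG :: "nat \<Rightarrow> nat set monoid" where
  "PG n = \<lparr>carrier = Pow {1..n}, mult = (\<lambda>A B. (A - B) \<union> (B - A)), one = {}\<rparr>"

definition Gnt :: "nat \<Rightarrow> nat \<Rightarrow> nat set set" where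
  "Gnt n t = generate (PG n) (gset n t ` {1..t})"

definition ctrans :: "nat \<Rightarrow> nat \<Rightarrow> int \<Rightarrow> nat set" where
  "ctrans n t s = (\<lambda>j. nat (lpr (s + int j) (int n))) ` {1..t}"

end

theory Submission imports Defs begin

lemma rem0: "rem n t 0 = t" by (simp add: rem_def)
lemma rem1: "rem n t (Suc 0) = n mod t" by (simp add: rem_def)
lemma remSS: "rem n t (Suc (Suc j)) = rem n t j mod rem n t (Suc j)"
  by (simp add: rem_def)
lemma quo1: "quo n t (Suc 0) = n div t" by (simp add: quo_def)
lemma quoSS: "quo n t (Suc (Suc j)) = rem n t j div rem n t (Suc j)"
  by (simp add: quo_def rem_def)

lemma nn0: "nn n t 0 = 0" by (simp add: nn_def)
lemma tt0: "tt n t 0 = 0" by (simp add: tt_def)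
lemma nnS: "nn n t (Suc m) = nn n t m + quo n t (Suc (2*m)) * rem n t (2*m)"
  by (simp add: nn_def)
lemma ttS: "tt n t (Suc m) = tt n t m + quo n t (Suc (Suc (2*m))) * rem n t (Suc (2*m))"
  by (simp add: tt_def)

lemma nn_id: "nn n t (Suc m) + rem n t (Suc (2*m)) = n"
proof (induction m)
  case 0 then show ?case by (simp add: nnS nn0 quo1 rem0 rem1)
next
  case (Suc m)
  have "nn n t (Suc (Suc m)) + rem n t (Suc (2 * Suc m))
     = nn n t (Suc m) + (rem n t (Suc (2*m)) div rem n t (Suc (Suc (2*m)))) * rem n t (Suc (Suc (2*m)))
       + rem n t (Suc (2*m)) mod rem n t (Suc (Suc (2*m)))"
    by (simp add: nnS quoSS remSS)
  also have "\<dots> = nn n t (Suc m) + rem n t (Suc (2*m))" by simp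
  finally show ?case using Suc by simp
qed

lemma tt_id: "tt n t m + rem n t (2*m) = t"
proof (induction m)
  case 0 then show ?case by (simp add: tt0 rem0)
next
  case (Suc m)
  have "tt n t (Suc m) + rem n t (2 * Suc m)
     = tt n t m + (rem n t (2*m) div rem n t (Suc (2*m))) * rem n t (Suc (2*m))
       + rem n t (2*m) mod rem n t (Suc (2*m))"
    by (simp add: ttS quoSS remSS)
  also have "\<dots> = tt n t m + rem n t (2*m)" by simp
  finally show ?case using Suc by simp
qed

lemma nn_mono: "m \<le> m' \<Longrightarrow> nn n t m \<le> nn n t m'"
  by (induction m' rule: dec_induct) (auto simp: nnS)
lemma tt_mono: "m \<le> m' \<Longrightarrow> tt n t m \<le> tt n t m'"
  by (induction m' rule: dec_induct) (auto simp: ttS)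

lemma nn_le: "nn n t m \<le> n"
proof (cases m)
  case (Suc k) then show ?thesis using nn_id[of n t k] by simp
qed (simp add: nn0)

lemma remS_mod: "rem n t (Suc j) = eu n t j mod rem n t j"
  by (simp add: rem_def)

lemma rem_dec: "0 < rem n t j \<Longrightarrow> rem n t (Suc j) < rem n t j"
  by (simp add: remS_mod)

lemma euk_ex: assumes "0 < t" shows "\<exists>k. 1 \<le> k \<and> rem n t k = 0"
proof (rule ccontr)
  assume "\<not> ?thesis"
  then have nz: "\<And>k. 0 < rem n t k" using assms by (metis One_nat_def bot_nat_0.not_eq_extremum less_one not_less rem0)
  have "rem n t j + j \<le> t" for j
  proof (induction j)
    case 0 then show ?case by (simp add: rem0)
  next
    case (Suc j) then show ?case using rem_dec[OF nz[of j]] by simp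
  qed
  from this[of "Suc t"] nz[of "Suc t"] show False by simp
qed

lemma euk_props: assumes "0 < t"
  shows "1 \<le> euk n t" "rem n t (euk n t) = 0" "\<And>j. j < euk n t \<Longrightarrow> 0 < rem n t j"
proof -
  obtain k where k: "1 \<le> k \<and> rem n t k = 0" using euk_ex[OF assms] by blast
  show "1 \<le> euk n t" "rem n t (euk n t) = 0" unfolding euk_def using LeastI[of "\<lambda>k. 1 \<le> k \<and> rem n t k = 0" k, OF k] by auto
  fix j assume j: "j < euk n t"
  show "0 < rem n t j"
  proof (cases j)
    case 0 then show ?thesis using assms by (simp add: rem0)
  next
    case (Suc j')
    have "\<not> (1 \<le> j \<and> rem n t j = 0)" using not_less_Least[of j "\<lambda>k. 1 \<le> k \<and> rem n t k = 0"] j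
      unfolding euk_def by blast
    then show ?thesis using Suc by simp
  qed
qed

lemma rem_beyond: assumes "0 < t" shows "rem n t (euk n t + 2*m) = 0"
proof (induction m)
  case 0 then show ?case using euk_props[OF assms] by simp
next
  case (Suc m)
  have "rem n t (euk n t + 2 * Suc m) = rem n t (euk n t + 2*m) mod rem n t (Suc (euk n t + 2*m))"
    using remSS[of n t "euk n t + 2*m"] by simp
  then show ?case using Suc by simp
qed

lemma quo_beyond: assumes "0 < t" "euk n t < j" shows "quo n t j = 0"
proof -
  obtain j' where j': "j = Suc (Suc j')" using assms euk_props(1)[OF assms(1), of n]
    by (metis One_nat_def Suc_le_lessD less_imp_Suc_add add_Suc)
  have q: "quo n t j = rem n t j' div rem n t (Suc j')" using j' quoSS by simp
  obtain d where d: "Suc j' = euk n t + d" using j' assms(2) by (metis less_Suc_eq_le le_add_diff_inverse)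
  show ?thesis
  proof (cases "even d")
    case True
    then obtain m where "d = 2*m" by blast
    then have "rem n t (Suc j') = 0" using d rem_beyond[OF assms(1)] by simp
    then show ?thesis using q by simp
  next
    case False
    then obtain m where "d = 2*m + 1" using oddE by blast
    then have "j' = euk n t + 2*m" using d by simp
    then have "rem n t j' = 0" using rem_beyond[OF assms(1)] by simp
    then show ?thesis using q by simp
  qed
qed

lemma quo_pos_le: "0 < t \<Longrightarrow> 0 < quo n t j \<Longrightarrow> j \<le> euk n t"
  using quo_beyond by (metis not_less less_irrefl)

lemma aa_props: assumes "0 < i"
  shows "2 * aa n t i \<le> euk n t" "tt n t (aa n t i) < i"
    "\<And>b. 2*b \<le> euk n t \<Longrightarrow> tt n t b < i \<Longrightarrow> b \<le> aa n t i"
proof -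
  have ex: "2*0 \<le> euk n t \<and> tt n t 0 < i" using assms by (simp add: tt0)
  have bd: "\<And>y. 2*y \<le> euk n t \<and> tt n t y < i \<Longrightarrow> y \<le> euk n t" by auto
  show "2 * aa n t i \<le> euk n t" "tt n t (aa n t i) < i"
    unfolding aa_def using GreatestI_nat[of "\<lambda>a. 2*a \<le> euk n t \<and> tt n t a < i", OF ex bd] by auto
  fix b assume "2*b \<le> euk n t" "tt n t b < i"
  then show "b \<le> aa n t i" unfolding aa_def using Greatest_le_nat[of "\<lambda>a. 2*a \<le> euk n t \<and> tt n t a < i" b "euk n t"] bd by blast
qed

lemma lpr_eq: "0 < (r::int) \<Longrightarrow> 1 \<le> y \<Longrightarrow> y \<le> r \<Longrightarrow> y mod r = z mod r \<Longrightarrow> lpr z r = y"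
proof -
  assume a: "0 < r" "1 \<le> y" "y \<le> r" "y mod r = z mod r"
  have "(z - 1) mod r = (y - 1) mod r" using a(4) by (metis mod_diff_cong)
  also have "\<dots> = y - 1" using a by (simp add: mod_pos_pos_trivial)
  finally show ?thesis by (simp add: lpr_def)
qed

lemma lpr_props: assumes "0 < (r::int)" shows "1 \<le> lpr z r" "lpr z r \<le> r" "lpr z r mod r = z mod r"
proof -
  show "1 \<le> lpr z r" "lpr z r \<le> r" using assms by (simp_all add: lpr_def) (smt (verit) pos_mod_bound)
  have "lpr z r mod r = ((z - 1) mod r + 1) mod r" by (simp add: lpr_def)
  also have "\<dots> = (z - 1 + 1) mod r" by (metis mod_add_left_eq)
  finally show "lpr z r mod r = z mod r" by simp
qed

definition cg :: "nat \<Rightarrow> nat \<Rightarrow> nat \<Rightarrow> nat \<Rightarrow> nat \<Rightarrow> bool" where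
  "cg x a i b r \<longleftrightarrow> (int x - int a) mod int r = (int i - int b) mod int r"

definition PP :: "nat \<Rightarrow> nat \<Rightarrow> nat \<Rightarrow> nat \<Rightarrow> bool" where
  "PP n t i x \<longleftrightarrow> (\<exists>j. (nn n t j < x \<and> x \<le> nn n t (Suc j) \<and> tt n t j < i \<and>
        cg x (nn n t j) i (tt n t j) (rem n t (2*j))) \<or>
     (tt n t j < i \<and> i \<le> tt n t (Suc j) \<and> nn n t (Suc j) < x \<and> x \<le> n \<and>
        cg x (nn n t (Suc j)) i (tt n t j) (rem n t (Suc (2*j)))))"

lemma char: assumes t: "0 < t" and i: "1 \<le> i" "i \<le> t"
  shows "x \<in> gset n t i \<longleftrightarrow> PP n t i x"
proof
  define a where "a = aa n t i"
  define k where "k = euk n t"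
  have a1: "2*a \<le> k" and a2: "tt n t a < i" and a3: "\<And>b. 2*b \<le> k \<Longrightarrow> tt n t b < i \<Longrightarrow> b \<le> a"
    using aa_props[where i=i and n=n and t=t] i unfolding a_def k_def by auto
  assume x: "x \<in> gset n t i"
  then consider (p) j where "j \<le> a" "x \<in> gpart n t i j" | (g) "x \<in> gtop n t i"
    unfolding gset_def a_def by blast
  then show "PP n t i x"
  proof cases
    case p
    then have "tt n t j < i" using tt_mono[of j a n t] a2 by simp
    then show ?thesis using p(2) unfolding PP_def gpart_def cg_def by blast
  next
    case g
    then have kne: "k \<noteq> 2*a+1" and xe: "x = nat (int (nn n t (Suc a)) + lpr (int i - int (tt n t a)) (int (rem n t (2*a + 1))))"
      unfolding gtop_def Let_def a_def k_def by (auto split: if_splits)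
    have "2*a \<noteq> k"
    proof
      assume "2*a = k"
      then have "rem n t (2*a) = 0" using euk_props(2)[OF t] k_def by simp
      then show False using tt_id[of n t a] a2 i by simp
    qed
    then have lt: "Suc (2*a) < k" using a1 kne by simp
    then have rpos: "0 < rem n t (Suc (2*a))" using euk_props(3)[OF t] k_def by simp
    have "\<not> tt n t (Suc a) < i" using a3[of "Suc a"] lt by auto
    then have ile: "i \<le> tt n t (Suc a)" by simp
    define r where "r = rem n t (Suc (2*a))"
    define N where "N = nn n t (Suc a)"
    have nN: "n = N + r" using nn_id[of n t a] unfolding N_def r_def by simp
    have L: "1 \<le> lpr (int i - int (tt n t a)) (int r)" "lpr (int i - int (tt n t a)) (int r) \<le> int r"
      "lpr (int i - int (tt n t a)) (int r) mod int r = (int i - int (tt n t a)) mod int r"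
      using lpr_props[of "int r"] rpos r_def by auto
    have xi: "int x = int N + lpr (int i - int (tt n t a)) (int r)"
      using xe L unfolding N_def r_def by simp
    have "N < x" "x \<le> n" using xi L nN by linarith+
    moreover have "cg x N i (tt n t a) r" unfolding cg_def using xi L by simp
    ultimately show ?thesis unfolding PP_def N_def r_def using a2 ile by blast
  qed
next
  define a where "a = aa n t i"
  define k where "k = euk n t"
  have a1: "2*a \<le> k" and a2: "tt n t a < i" and a3: "\<And>b. 2*b \<le> k \<Longrightarrow> tt n t b < i \<Longrightarrow> b \<le> a"
    using aa_props[where i=i and n=n and t=t] i unfolding a_def k_def by auto
  assume "PP n t i x"
  then obtain j where
    "(nn n t j < x \<and> x \<le> nn n t (Suc j) \<and> tt n t j < i \<and>
        cg x (nn n t j) i (tt n t j) (rem n t (2*j))) \<or>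
     (tt n t j < i \<and> i \<le> tt n t (Suc j) \<and> nn n t (Suc j) < x \<and> x \<le> n \<and>
        cg x (nn n t (Suc j)) i (tt n t j) (rem n t (Suc (2*j))))" unfolding PP_def by blast
  then consider (c1) "nn n t j < x" "x \<le> nn n t (Suc j)" "tt n t j < i"
        "cg x (nn n t j) i (tt n t j) (rem n t (2*j))"
    | (c2) "tt n t j < i" "i \<le> tt n t (Suc j)" "nn n t (Suc j) < x" "x \<le> n"
        "cg x (nn n t (Suc j)) i (tt n t j) (rem n t (Suc (2*j)))" by blast
  then show "x \<in> gset n t i"
  proof cases
    case c1
    then have "0 < quo n t (Suc (2*j))" using nnS[of n t j] by (cases "quo n t (Suc (2*j))") auto
    then have "Suc (2*j) \<le> k" using quo_pos_le[OF t] k_def by blast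
    then have "j \<le> a" using a3 c1(3) by simp
    moreover have "x \<in> gpart n t i j" using c1 unfolding gpart_def cg_def by simp
    ultimately show ?thesis unfolding gset_def a_def by blast
  next
    case c2
    then have "0 < quo n t (Suc (Suc (2*j)))" using ttS[of n t j] by (cases "quo n t (Suc (Suc (2*j)))") auto
    then have kk: "Suc (Suc (2*j)) \<le> k" using quo_pos_le[OF t] k_def by blast
    then have "j \<le> a" using a3 c2(1) by simp
    moreover have "a \<le> j"
    proof (rule ccontr)
      assume "\<not> a \<le> j"
      then have "tt n t (Suc j) \<le> tt n t a" using tt_mono by simp
      then show False using a2 c2(2) by simp
    qed
    ultimately have aj: "a = j" by simp
    have rpos: "0 < rem n t (Suc (2*j))" using euk_props(3)[OF t] k_def kk by simp
    define r where "r = rem n t (Suc (2*j))"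
    define N where "N = nn n t (Suc j)"
    have nN: "n = N + r" using nn_id[of n t j] unfolding N_def r_def by simp
    have "lpr (int i - int (tt n t j)) (int r) = int x - int N"
      apply (rule lpr_eq) using rpos c2 nN unfolding r_def N_def cg_def by auto
    then have "x = nat (int N + lpr (int i - int (tt n t j)) (int r))" by simp
    then have "x \<in> gtop n t i" using kk unfolding gtop_def Let_def a_def[symmetric] k_def[symmetric] aj N_def r_def
      by simp
    then show ?thesis unfolding gset_def by blast
  qed
qed

lemma eu_shift: "eu t (n mod t) j = eu n t (Suc j) \<and> eu t (n mod t) (Suc j) = eu n t (Suc (Suc j))"
  by (induction j) auto

lemma rem_shift: "rem t (n mod t) j = rem n t (Suc j)"
  using eu_shift by (simp add: rem_def)

lemma quo_shift: "1 \<le> j \<Longrightarrow> quo t (n mod t) j = quo n t (Suc j)"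
  using eu_shift[of t n "j - 1"] eu_shift[of t n j] by (simp add: quo_def)

lemma nn_shift: "nn t (n mod t) m = tt n t m"
  by (induction m) (simp_all add: nnS ttS nn0 tt0 quo_shift rem_shift)

lemma nn1: "nn n t 1 = (n div t) * t"
  using nnS[of n t 0] by (simp add: nn0 quo1 rem0)

lemma tt_shift: "tt t (n mod t) m + nn n t 1 = nn n t (Suc m)"
proof (induction m)
  case 0 then show ?case by (simp add: tt0)
next
  case (Suc m)
  have "tt t (n mod t) (Suc m) = tt t (n mod t) m + quo n t (Suc (Suc (Suc (2*m)))) * rem n t (Suc (Suc (2*m)))"
    by (simp add: ttS quo_shift rem_shift)
  then show ?case using Suc nnS[of n t "Suc m"] by simp
qed

lemma PP_bounds: "PP n t i x \<Longrightarrow> 1 \<le> x \<and> x \<le> n"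
proof -
  assume "PP n t i x"
  then obtain j where
    "(nn n t j < x \<and> x \<le> nn n t (Suc j)) \<or> (nn n t (Suc j) < x \<and> x \<le> n)" unfolding PP_def by blast
  moreover have "nn n t (Suc j) \<le> n" by (rule nn_le)
  ultimately show ?thesis by linarith
qed

lemma PP_low: assumes "1 \<le> i" "x \<le> nn n t 1"
  shows "PP n t i x \<longleftrightarrow> (1 \<le> x \<and> cg x 0 i 0 t)"
proof
  assume "PP n t i x"
  then obtain j where
    "(nn n t j < x \<and> x \<le> nn n t (Suc j) \<and> tt n t j < i \<and>
        cg x (nn n t j) i (tt n t j) (rem n t (2*j))) \<or>
     (tt n t j < i \<and> i \<le> tt n t (Suc j) \<and> nn n t (Suc j) < x \<and> x \<le> n \<and>
        cg x (nn n t (Suc j)) i (tt n t j) (rem n t (Suc (2*j))))" unfolding PP_def by blast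
  moreover have "\<not> nn n t (Suc j) < x" using nn_mono[of 1 "Suc j" n t] assms by simp
  moreover have "j \<noteq> 0 \<Longrightarrow> \<not> nn n t j < x" using nn_mono[of 1 j n t] assms by simp
  ultimately have "j = 0" "nn n t j < x" "cg x (nn n t j) i (tt n t j) (rem n t (2*j))" by auto
  then show "1 \<le> x \<and> cg x 0 i 0 t" by (simp add: nn0 tt0 rem0)
next
  assume "1 \<le> x \<and> cg x 0 i 0 t"
  then have "nn n t 0 < x \<and> x \<le> nn n t (Suc 0) \<and> tt n t 0 < i \<and>
        cg x (nn n t 0) i (tt n t 0) (rem n t (2*0))" using assms by (simp add: nn0 tt0 rem0)
  then show "PP n t i x" unfolding PP_def by blast
qed

lemma cg_swap: "int x - int a = int y - int b \<Longrightarrow> cg x a i c r \<longleftrightarrow> cg i c y b r"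
  unfolding cg_def by auto


lemma PP_high: assumes "nn n t 1 < x" "x \<le> n" "i \<le> t"
  shows "PP n t i x \<longleftrightarrow> PP t (n mod t) (x - nn n t 1) i"
proof -
  define Q where "Q = nn n t 1"
  define y where "y = x - Q"
  have nn': "\<And>m. nn t (n mod t) m = tt n t m" by (rule nn_shift)
  have tt': "\<And>m. tt t (n mod t) m = nn n t (Suc m) - Q"
    using tt_shift unfolding Q_def by (metis add_diff_cancel_right')
  have QS: "\<And>m. Q \<le> nn n t (Suc m)" unfolding Q_def by (rule nn_mono) simp
  have rm': "\<And>j. rem t (n mod t) j = rem n t (Suc j)" by (rule rem_shift)
  have Qx: "Q < x" using assms(1) Q_def by simp
  have yx: "\<And>m. int y - int (nn n t (Suc m) - Q) = int x - int (nn n t (Suc m))"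
    using QS Qx unfolding y_def by (simp add: of_nat_diff)
  have sw: "\<And>m i c r. cg x (nn n t (Suc m)) i c r \<longleftrightarrow> cg i c y (nn n t (Suc m) - Q) r"
    using cg_swap[OF yx[symmetric]] by blast
  have lt1: "\<And>m. nn n t (Suc m) < x \<longleftrightarrow> nn n t (Suc m) - Q < y"
    using QS Qx unfolding y_def by (meson diff_less_mono le_less_trans less_diff_iff nat_less_le)
  have le1: "\<And>m. x \<le> nn n t (Suc m) \<longleftrightarrow> y \<le> nn n t (Suc m) - Q"
    using QS Qx unfolding y_def by (meson diff_le_mono le_diff_iff less_imp_le_nat)
  show ?thesis unfolding Q_def[symmetric] y_def[symmetric] PP_def nn' tt' rm'
  proof
    assume "\<exists>j. nn n t j < x \<and> x \<le> nn n t (Suc j) \<and> tt n t j < i \<and>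
          cg x (nn n t j) i (tt n t j) (rem n t (2*j)) \<or>
       (tt n t j < i \<and> i \<le> tt n t (Suc j) \<and> nn n t (Suc j) < x \<and> x \<le> n \<and>
          cg x (nn n t (Suc j)) i (tt n t j) (rem n t (Suc (2*j))))"
    then obtain j where
      "(nn n t j < x \<and> x \<le> nn n t (Suc j) \<and> tt n t j < i \<and>
          cg x (nn n t j) i (tt n t j) (rem n t (2*j))) \<or>
       (tt n t j < i \<and> i \<le> tt n t (Suc j) \<and> nn n t (Suc j) < x \<and> x \<le> n \<and>
          cg x (nn n t (Suc j)) i (tt n t j) (rem n t (Suc (2*j))))" by blast
    then consider (c1) "nn n t j < x" "x \<le> nn n t (Suc j)" "tt n t j < i"
          "cg x (nn n t j) i (tt n t j) (rem n t (2*j))"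
      | (c2) "tt n t j < i" "i \<le> tt n t (Suc j)" "nn n t (Suc j) < x" "x \<le> n"
          "cg x (nn n t (Suc j)) i (tt n t j) (rem n t (Suc (2*j)))" by blast
    then show "\<exists>j. tt n t j < i \<and> i \<le> tt n t (Suc j) \<and> nn n t (Suc j) - Q < y \<and>
          cg i (tt n t j) y (nn n t (Suc j) - Q) (rem n t (Suc (2 * j))) \<or>
         nn n t (Suc j) - Q < y \<and> y \<le> nn n t (Suc (Suc j)) - Q \<and> tt n t (Suc j) < i \<and> i \<le> t \<and>
          cg i (tt n t (Suc j)) y (nn n t (Suc j) - Q) (rem n t (Suc (Suc (2 * j))))"
    proof cases
      case c1
      have "j \<noteq> 0" using c1(2) Qx unfolding Q_def by (metis One_nat_def not_le)
      then obtain j' where j: "j = Suc j'" by (cases j) auto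
      have "nn n t (Suc j') - Q < y" using c1(1) j lt1 by simp
      moreover have "y \<le> nn n t (Suc (Suc j')) - Q" using c1(2) j le1 by simp
      moreover have "tt n t (Suc j') < i" using c1(3) j by simp
      moreover have "cg i (tt n t (Suc j')) y (nn n t (Suc j') - Q) (rem n t (Suc (Suc (2 * j'))))"
        using c1(4) j sw by simp
      ultimately show ?thesis using assms(3) by blast
    next
      case c2
      have "nn n t (Suc j) - Q < y" using c2(3) lt1 by simp
      moreover have "cg i (tt n t j) y (nn n t (Suc j) - Q) (rem n t (Suc (2 * j)))"
        using c2(5) sw by simp
      ultimately show ?thesis using c2 by blast
    qed
  next
    assume "\<exists>j. tt n t j < i \<and> i \<le> tt n t (Suc j) \<and> nn n t (Suc j) - Q < y \<and>
          cg i (tt n t j) y (nn n t (Suc j) - Q) (rem n t (Suc (2 * j))) \<or>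
         nn n t (Suc j) - Q < y \<and> y \<le> nn n t (Suc (Suc j)) - Q \<and> tt n t (Suc j) < i \<and> i \<le> t \<and>
          cg i (tt n t (Suc j)) y (nn n t (Suc j) - Q) (rem n t (Suc (Suc (2 * j))))"
    then obtain j where
      "(tt n t j < i \<and> i \<le> tt n t (Suc j) \<and> nn n t (Suc j) - Q < y \<and>
          cg i (tt n t j) y (nn n t (Suc j) - Q) (rem n t (Suc (2 * j)))) \<or>
         (nn n t (Suc j) - Q < y \<and> y \<le> nn n t (Suc (Suc j)) - Q \<and> tt n t (Suc j) < i \<and> i \<le> t \<and>
          cg i (tt n t (Suc j)) y (nn n t (Suc j) - Q) (rem n t (Suc (Suc (2 * j)))))" by blast
    then consider (c1) "tt n t j < i" "i \<le> tt n t (Suc j)" "nn n t (Suc j) - Q < y"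
          "cg i (tt n t j) y (nn n t (Suc j) - Q) (rem n t (Suc (2 * j)))"
      | (c2) "nn n t (Suc j) - Q < y" "y \<le> nn n t (Suc (Suc j)) - Q" "tt n t (Suc j) < i"
          "cg i (tt n t (Suc j)) y (nn n t (Suc j) - Q) (rem n t (Suc (Suc (2 * j))))" by blast
    then show "\<exists>j. nn n t j < x \<and> x \<le> nn n t (Suc j) \<and> tt n t j < i \<and>
          cg x (nn n t j) i (tt n t j) (rem n t (2*j)) \<or>
       (tt n t j < i \<and> i \<le> tt n t (Suc j) \<and> nn n t (Suc j) < x \<and> x \<le> n \<and>
          cg x (nn n t (Suc j)) i (tt n t j) (rem n t (Suc (2*j))))"
    proof cases
      case c1
      have "nn n t (Suc j) < x" using c1(3) lt1 by simp
      moreover have "cg x (nn n t (Suc j)) i (tt n t j) (rem n t (Suc (2*j)))" using c1(4) sw by simp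
      ultimately show ?thesis using c1 assms(2) by blast
    next
      case c2
      have "nn n t (Suc j) < x" using c2(1) lt1 by simp
      moreover have "x \<le> nn n t (Suc (Suc j))" using c2(2) le1 by simp
      moreover have "cg x (nn n t (Suc j)) i (tt n t (Suc j)) (rem n t (2*(Suc j)))" using c2(4) sw by simp
      ultimately show ?thesis using c2(3) by blast
    qed
  qed
qed

lemma gset_sub: "0 < t \<Longrightarrow> 1 \<le> i \<Longrightarrow> i \<le> t \<Longrightarrow> gset n t i \<subseteq> {1..n}"
  using char PP_bounds by fastforce

lemma rec_low: assumes "0 < t" "1 \<le> i" "i \<le> t" "1 \<le> x" "x \<le> (n div t)*t"
  shows "x \<in> gset n t i \<longleftrightarrow> x mod t = i mod t"
proof -
  have "x \<in> gset n t i \<longleftrightarrow> cg x 0 i 0 t"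
    using char[OF assms(1-3)] PP_low[of i x n t] assms nn1[of n t] by simp
  also have "\<dots> \<longleftrightarrow> x mod t = i mod t" unfolding cg_def
    by (metis of_nat_0 diff_zero of_nat_eq_iff zmod_int)
  finally show ?thesis .
qed

lemma rec_high: assumes "0 < t" "1 \<le> i" "i \<le> t" "(n div t)*t < x" "x \<le> n"
  shows "x \<in> gset n t i \<longleftrightarrow> i \<in> gset t (n mod t) (x - (n div t)*t)"
proof -
  have nq: "n = (n div t)*t + n mod t" by simp
  have r: "0 < n mod t" "1 \<le> x - (n div t)*t" "x - (n div t)*t \<le> n mod t" "n mod t \<le> t"
    using assms nq by (linarith, linarith, linarith, simp add: less_imp_le)
  have "x \<in> gset n t i \<longleftrightarrow> PP n t i x" using char[OF assms(1-3)] by simp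
  also have "\<dots> \<longleftrightarrow> PP t (n mod t) (x - (n div t)*t) i" using PP_high[of n t x i] assms nn1[of n t] by simp
  also have "\<dots> \<longleftrightarrow> i \<in> gset t (n mod t) (x - (n div t)*t)"
    using char[where t="n mod t" and i="x - (n div t)*t" and n=t and x=i] r by simp
  finally show ?thesis .
qed

definition indep :: "(nat \<Rightarrow> nat \<Rightarrow> bool) \<Rightarrow> nat set \<Rightarrow> nat set \<Rightarrow> bool" where
  "indep R I X \<longleftrightarrow> (\<forall>S \<subseteq> I. S \<noteq> {} \<longrightarrow> (\<exists>x\<in>X. odd (card {i\<in>S. R i x})))"

lemma card_symdiff_parity: assumes "finite A" "finite B"
  shows "odd (card ((A - B) \<union> (B - A))) \<longleftrightarrow> (odd (card A) \<noteq> odd (card B))"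
proof -
  have 1: "card ((A - B) \<union> (B - A)) = card (A - B) + card (B - A)"
    using assms by (intro card_Un_disjoint) auto
  have 2: "card A = card (A - B) + card (A \<inter> B)"
    using assms card_Int_Diff[of A B] by simp
  have 3: "card B = card (B - A) + card (A \<inter> B)"
    using assms card_Int_Diff[of B A] by (simp add: Int_commute)
  show ?thesis using 1 2 3 by auto
qed

definition phi :: "(nat \<Rightarrow> nat \<Rightarrow> bool) \<Rightarrow> nat set \<Rightarrow> nat set \<Rightarrow> nat set" where
  "phi R X S = {x\<in>X. odd (card {i\<in>S. R i x})}"

lemma phi_symdiff: assumes "finite S1" "finite S2"
  shows "phi R X ((S1 - S2) \<union> (S2 - S1)) = (phi R X S1 - phi R X S2) \<union> (phi R X S2 - phi R X S1)"
proof -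
  have "\<And>x. {i\<in>(S1 - S2) \<union> (S2 - S1). R i x} = ({i\<in>S1. R i x} - {i\<in>S2. R i x}) \<union> ({i\<in>S2. R i x} - {i\<in>S1. R i x})"
    by auto
  moreover have "\<And>x. odd (card (({i\<in>S1. R i x} - {i\<in>S2. R i x}) \<union> ({i\<in>S2. R i x} - {i\<in>S1. R i x}))) \<longleftrightarrow> (odd (card {i\<in>S1. R i x}) \<noteq> odd (card {i\<in>S2. R i x}))"
  proof -
    fix x
    have "finite {i\<in>S1. R i x}" "finite {i\<in>S2. R i x}" using assms by auto
    then show "odd (card (({i\<in>S1. R i x} - {i\<in>S2. R i x}) \<union> ({i\<in>S2. R i x} - {i\<in>S1. R i x}))) \<longleftrightarrow> (odd (card {i\<in>S1. R i x}) \<noteq> odd (card {i\<in>S2. R i x}))"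
      by (rule card_symdiff_parity)
  qed
  ultimately have "\<And>x. odd (card {i\<in>(S1 - S2) \<union> (S2 - S1). R i x}) \<longleftrightarrow> (odd (card {i\<in>S1. R i x}) \<noteq> odd (card {i\<in>S2. R i x}))"
    by simp
  then show ?thesis unfolding phi_def by auto
qed

lemma sum_parity: "finite T \<Longrightarrow> even (\<Sum>x\<in>T. f x :: nat) \<longleftrightarrow> even (card {x\<in>T. odd (f x)})"
proof (induction T rule: finite_induct)
  case empty then show ?case by simp
next
  case (insert a T)
  have e: "{x\<in>insert a T. odd (f x)} = (if odd (f a) then insert a {x\<in>T. odd (f x)} else {x\<in>T. odd (f x)})"
    by auto
  have c: "card {x\<in>insert a T. odd (f x)} = (if odd (f a) then Suc (card {x\<in>T. odd (f x)}) else card {x\<in>T. odd (f x)})"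
    unfolding e using insert by simp
  show ?case using insert c by simp
qed

lemma card_filter_sum: "finite T \<Longrightarrow> card {x\<in>T. P x} = (\<Sum>x\<in>T. if P x then 1 else (0::nat))"
  by (simp add: sum.If_cases Int_def conj_commute)

lemma indep_transpose: assumes fin: "finite I" "finite X" and cd: "card I = card X" and ind: "indep R I X"
  shows "indep (\<lambda>x i. R i x) X I"
proof -
  have inj: "inj_on (phi R X) (Pow I)"
  proof (rule inj_onI)
    fix S1 S2 assume S: "S1 \<in> Pow I" "S2 \<in> Pow I" and eq: "phi R X S1 = phi R X S2"
    have f: "finite S1" "finite S2" using S fin finite_subset by auto
    have "phi R X ((S1 - S2) \<union> (S2 - S1)) = {}" using phi_symdiff[OF f] eq by simp
    then have "(S1 - S2) \<union> (S2 - S1) = {}"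
    proof (rule contrapos_pp)
      assume ne: "(S1 - S2) \<union> (S2 - S1) \<noteq> {}"
      have "(S1 - S2) \<union> (S2 - S1) \<subseteq> I" using S by auto
      then obtain x where "x \<in> X" "odd (card {i\<in>(S1 - S2) \<union> (S2 - S1). R i x})"
        using ind ne unfolding indep_def by blast
      then have "x \<in> phi R X ((S1 - S2) \<union> (S2 - S1))" unfolding phi_def by simp
      then show "phi R X ((S1 - S2) \<union> (S2 - S1)) \<noteq> {}" by blast
    qed
    then show "S1 = S2" by blast
  qed
  have sub: "phi R X ` Pow I \<subseteq> Pow X" unfolding phi_def by auto
  have "card (phi R X ` Pow I) = card (Pow X)"
    using card_image[OF inj] fin cd by (simp add: card_Pow)
  then have surj: "phi R X ` Pow I = Pow X" using sub fin by (simp add: card_subset_eq)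
  show ?thesis unfolding indep_def
  proof (intro allI impI)
    fix T assume T: "T \<subseteq> X" "T \<noteq> {}"
    show "\<exists>i\<in>I. odd (card {x\<in>T. R i x})"
    proof (rule ccontr)
      assume "\<not> ?thesis"
      then have ev: "\<And>i. i \<in> I \<Longrightarrow> even (card {x\<in>T. R i x})" by blast
      obtain b where b: "b \<in> T" using T by blast
      have "{b} \<in> phi R X ` Pow I" using surj b T by auto
      then obtain S where S: "S \<subseteq> I" "phi R X S = {b}" by auto
      have fS: "finite S" "finite T" using S(1) T(1) fin by (auto intro: finite_subset)
      have "(\<Sum>i\<in>S. card {x\<in>T. R i x}) = (\<Sum>i\<in>S. \<Sum>x\<in>T. if R i x then 1 else (0::nat))"
        using card_filter_sum[OF fS(2)] by (intro sum.cong) auto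
      also have "\<dots> = (\<Sum>x\<in>T. \<Sum>i\<in>S. if R i x then 1 else (0::nat))" by (rule sum.swap)
      also have "\<dots> = (\<Sum>x\<in>T. card {i\<in>S. R i x})" using card_filter_sum[OF fS(1)] by (intro sum.cong) auto
      finally have dc: "(\<Sum>i\<in>S. card {x\<in>T. R i x}) = (\<Sum>x\<in>T. card {i\<in>S. R i x})" .
      have "even (\<Sum>i\<in>S. card {x\<in>T. R i x})" using ev S by (auto intro: dvd_sum)
      then have "even (card {x\<in>T. odd (card {i\<in>S. R i x})})" using dc sum_parity[OF fS(2), of "\<lambda>x. card {i\<in>S. R i x}"] by simp
      moreover have "{x\<in>T. odd (card {i\<in>S. R i x})} = {b}"
        using S(2) b T unfolding phi_def by auto
      ultimately show False by simp
    qed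
  qed
qed

lemma mod_uniq: "0 < (t::nat) \<Longrightarrow> 1 \<le> i \<Longrightarrow> i \<le> t \<Longrightarrow> 1 \<le> j \<Longrightarrow> j \<le> t \<Longrightarrow> i mod t = j mod t \<Longrightarrow> i = j"
  by (cases "i = t"; cases "j = t") auto

lemma resid: assumes "0 < (t::nat)" "i \<le> t"
  shows "\<exists>x. s < x \<and> x \<le> s + t \<and> x mod t = i mod t"
proof -
  define x where "x = i + t * ((s + t - i) div t)"
  have d: "t * ((s + t - i) div t) + (s + t - i) mod t = s + t - i" by simp
  have "(s + t - i) mod t < t" using assms by simp
  then have "s < x" "x \<le> s + t" using d assms unfolding x_def by linarith+
  moreover have "x mod t = i mod t" unfolding x_def by simp
  ultimately show ?thesis by blast
qed

lemma Q_ge: "0 < t \<Longrightarrow> t \<le> n \<Longrightarrow> t \<le> n div t * (t::nat)"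
proof -
  assume a: "0 < t" "t \<le> n"
  have "t div t \<le> n div t" using a(2) by (rule div_le_mono)
  then have "1 \<le> n div t" using a(1) by simp
  then show "t \<le> n div t * t" by simp
qed

lemma blk_res: assumes "0 < t" "t \<le> (n::nat)" shows "(n div t * t - t + i) mod t = i mod t"
proof -
  have "t \<le> n div t * t" using assms by (rule Q_ge)
  then have "1 \<le> n div t" using assms(1) by (cases "n div t") auto
  then have "n div t * t - t = (n div t - 1) * t" by (simp add: diff_mult_distrib)
  then show ?thesis by simp
qed

lemma block_hit: assumes "0 < t" "t \<le> n" "S \<subseteq> {1..t}" "i \<in> S" "1 \<le> x" "x \<le> n div t * t" "x mod t = i mod t"
  shows "odd (card {j\<in>S. x \<in> gset n t j})"
proof -
  have "{j\<in>S. x \<in> gset n t j} = {i}"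
  proof -
    have "\<And>j. j \<in> S \<Longrightarrow> x \<in> gset n t j \<longleftrightarrow> j = i"
    proof -
      fix j assume j: "j \<in> S"
      have "x \<in> gset n t j \<longleftrightarrow> x mod t = j mod t" using rec_low[of t j x n] assms j by auto
      moreover have "1 \<le> j" "j \<le> t" "1 \<le> i" "i \<le> t" using assms j by auto
      ultimately show "x \<in> gset n t j \<longleftrightarrow> j = i" using mod_uniq[of t i j] assms by auto
    qed
    then show ?thesis using assms(4) by auto
  qed
  then show ?thesis by simp
qed

lemma tail_hit: assumes "0 < t" "t \<le> n" and ind: "indep (\<lambda>y j. j \<in> gset t (n mod t) y) A B"
  and AB: "A \<subseteq> {1..n mod t}" "B \<subseteq> {1..t}" "card A = card B" and S: "S \<subseteq> B" "S \<noteq> {}"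
  shows "\<exists>y\<in>A. odd (card {j\<in>S. n div t * t + y \<in> gset n t j})"
proof -
  have fin: "finite A" "finite B" using AB finite_subset by auto
  have "indep (\<lambda>j y. j \<in> gset t (n mod t) y) B A" using indep_transpose[OF fin AB(3) ind] by simp
  then obtain y where y: "y \<in> A" "odd (card {j\<in>S. j \<in> gset t (n mod t) y})"
    using S unfolding indep_def by blast
  have n: "n = n div t * t + n mod t" by simp
  have "{j\<in>S. n div t * t + y \<in> gset n t j} = {j\<in>S. j \<in> gset t (n mod t) y}"
  proof -
    have "\<And>j. j \<in> S \<Longrightarrow> n div t * t + y \<in> gset n t j \<longleftrightarrow> j \<in> gset t (n mod t) y"
    proof -
      fix j assume j: "j \<in> S"
      have "1 \<le> y" "y \<le> n mod t" using y AB by auto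
      moreover have "1 \<le> j" "j \<le> t" using j S AB by auto
      moreover have "n div t * t + y \<le> n" using \<open>y \<le> n mod t\<close> n by linarith
      ultimately show "n div t * t + y \<in> gset n t j \<longleftrightarrow> j \<in> gset t (n mod t) y"
        using rec_high[of t j n "n div t * t + y"] assms by simp
    qed
    then show ?thesis by auto
  qed
  then show ?thesis using y by (metis (no_types, lifting))
qed

lemma tl_hit: assumes "0 < t" "t \<le> n" "S \<subseteq> {1..m}" "m \<le> n mod t" "i \<in> S"
  shows "odd (card {j\<in>S. n div t * t + i \<in> gset n t j})"
proof -
  define r where "r = n mod t"
  have r: "0 < r" "r \<le> t" "i \<le> r" "1 \<le> i" using assms unfolding r_def by (auto simp: less_imp_le)
  have n: "n = n div t * t + r" unfolding r_def by simp
  have rq: "r \<le> t div r * r" using Q_ge[OF r(1) r(2)] .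
  have "{j\<in>S. n div t * t + i \<in> gset n t j} = {i}"
  proof -
    have "\<And>j. j \<in> S \<Longrightarrow> n div t * t + i \<in> gset n t j \<longleftrightarrow> j = i"
    proof -
      fix j assume j: "j \<in> S"
      have j1: "1 \<le> j" "j \<le> r" using j assms unfolding r_def by auto
      have "n div t * t + i \<in> gset n t j \<longleftrightarrow> j \<in> gset t r i"
        using rec_high[of t j n "n div t * t + i"] assms j r n unfolding r_def by (auto simp del: div_mult_mod_eq)
      also have "\<dots> \<longleftrightarrow> j mod r = i mod r" using rec_low[of r i j t] r j1 rq by auto
      also have "\<dots> \<longleftrightarrow> j = i" using mod_uniq[of r i j] r j1 by auto
      finally show "n div t * t + i \<in> gset n t j \<longleftrightarrow> j = i" .
    qed
    then show ?thesis using assms(5) by auto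
  qed
  then show ?thesis by simp
qed

definition win :: "nat \<Rightarrow> nat \<Rightarrow> nat \<Rightarrow> nat set" where
  "win n t s = (if s + t \<le> n then {s+1..s+t} else {s+1..n} \<union> {1..s+t-n})"

definition Inv :: "nat \<Rightarrow> nat \<Rightarrow> bool" where
  "Inv n t \<longleftrightarrow> (\<forall>s<n. indep (\<lambda>i x. x \<in> gset n t i) {1..t} (win n t s)) \<and>
     (\<forall>m. 1 \<le> m \<and> m \<le> t \<longrightarrow> indep (\<lambda>i x. x \<in> gset n t i) {t-m+1..t} {n-m+1..n})"

lemma main: "0 < t \<Longrightarrow> t \<le> n \<Longrightarrow> Inv n t"
proof (induction t arbitrary: n rule: less_induct)
  case (less t n)
  define r where "r = n mod t"
  define Q where "Q = n div t * t"
  have t: "0 < t" "t \<le> n" using less by auto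
  have nQ: "n = Q + r" unfolding Q_def r_def by simp
  have rt: "r < t" unfolding r_def using t by simp
  have tQ: "t \<le> Q" unfolding Q_def using Q_ge t by simp
  have IH: "0 < r \<Longrightarrow> Inv t r" using less.IH[of r t] rt unfolding r_def by simp
  have IHw: "\<And>b. 0 < r \<Longrightarrow> b + r \<le> t \<Longrightarrow> indep (\<lambda>y j. j \<in> gset t r y) {1..r} {b+1..b+r}"
  proof -
    fix b assume a: "0 < r" "b + r \<le> t"
    have "b < t" using a by simp
    then have "indep (\<lambda>y j. j \<in> gset t r y) {1..r} (win t r b)" using IH[OF a(1)] unfolding Inv_def by blast
    then show "indep (\<lambda>y j. j \<in> gset t r y) {1..r} {b+1..b+r}" using a unfolding win_def by simp
  qed
  have IHb: "\<And>m. 1 \<le> m \<Longrightarrow> m \<le> r \<Longrightarrow> indep (\<lambda>y j. j \<in> gset t r y) {r-m+1..r} {t-m+1..t}"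
    using IH unfolding Inv_def by (metis less_le_trans less_one not_less)
  have blk: "\<And>S i x. S \<subseteq> {1..t} \<Longrightarrow> i \<in> S \<Longrightarrow> 1 \<le> x \<Longrightarrow> x \<le> Q \<Longrightarrow> x mod t = i mod t \<Longrightarrow>
      odd (card {j\<in>S. x \<in> gset n t j})"
    using block_hit[OF t] unfolding Q_def by blast
  have blk2: "\<And>S i. S \<subseteq> {1..t} \<Longrightarrow> i \<in> S \<Longrightarrow> odd (card {j\<in>S. Q - t + i \<in> gset n t j})"
  proof -
    fix S i assume a: "S \<subseteq> {1..t}" "i \<in> S"
    have "1 \<le> i" "i \<le> t" using a by auto
    moreover have "1 \<le> Q - t + i" "Q - t + i \<le> Q" using tQ \<open>1 \<le> i\<close> \<open>i \<le> t\<close> by auto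
    moreover have "(Q - t + i) mod t = i mod t" using blk_res[OF t, of i] unfolding Q_def .
    ultimately show "odd (card {j\<in>S. Q - t + i \<in> gset n t j})"
      using blk[OF a, of "Q - t + i"] by blast
  qed
  have tail: "\<And>A B S. indep (\<lambda>y j. j \<in> gset t r y) A B \<Longrightarrow> A \<subseteq> {1..r} \<Longrightarrow> B \<subseteq> {1..t} \<Longrightarrow>
      card A = card B \<Longrightarrow> S \<subseteq> B \<Longrightarrow> S \<noteq> {} \<Longrightarrow> \<exists>y\<in>A. odd (card {j\<in>S. Q + y \<in> gset n t j})"
    using tail_hit[OF t] unfolding Q_def r_def by blast
  have tl: "\<And>S m i. S \<subseteq> {1..m} \<Longrightarrow> m \<le> r \<Longrightarrow> i \<in> S \<Longrightarrow> odd (card {j\<in>S. Q + i \<in> gset n t j})"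
    using tl_hit[OF t] unfolding Q_def r_def by blast
  have W: "indep (\<lambda>i x. x \<in> gset n t i) {1..t} (win n t s)" if s: "s < n" for s
    unfolding indep_def
  proof (intro allI impI)
    fix S assume S: "S \<subseteq> {1..t}" "S \<noteq> {}"
    then obtain i0 where i0: "i0 \<in> S" by blast
    show "\<exists>x\<in>win n t s. odd (card {i\<in>S. x \<in> gset n t i})"
    proof (cases "s + t \<le> Q")
      case True
      obtain x where x: "s < x" "x \<le> s + t" "x mod t = i0 mod t" using resid[OF t(1), of i0 s] i0 S by (meson atLeastAtMost_iff subsetD)
      have "x \<in> win n t s" using x True nQ unfolding win_def by auto
      moreover have "odd (card {i\<in>S. x \<in> gset n t i})" using blk[OF S(1) i0, of x] x True by simp
      ultimately show ?thesis by blast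
    next
      case sQ: False
      show ?thesis
      proof (cases "s + t \<le> n")
        case True
        define m where "m = s + t - Q"
        have w: "win n t s = {s+1..s+t}" using True unfolding win_def by simp
        show ?thesis
        proof (cases "\<exists>i\<in>S. m < i")
          case True
          then obtain i where i: "i \<in> S" "m < i" by blast
          have "i \<le> t" using i S by auto
          then have "Q - t + i \<in> win n t s" using w i sQ tQ unfolding m_def by auto
          then show ?thesis using blk2[OF S(1) i(1)] by blast
        next
          case False
          then have S1: "S \<subseteq> {1..m}" using S(1) unfolding subset_iff by (meson atLeastAtMost_iff not_less)
          have "m \<le> r" using True nQ unfolding m_def by simp
          moreover have "Q + i0 \<in> win n t s"
          proof -
            have "1 \<le> i0" "i0 \<le> m" using S1 i0 by auto
            then show ?thesis using w sQ True nQ rt unfolding m_def by auto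
          qed
          ultimately show ?thesis using tl[OF S1 _ i0] by blast
        qed
      next
        case False
        have w: "win n t s = {s+1..n} \<union> {1..s+t-n}" using False unfolding win_def by simp
        show ?thesis
        proof (cases "\<exists>i\<in>S. i \<le> s + t - n")
          case True
          then obtain i where i: "i \<in> S" "i \<le> s + t - n" by blast
          have "i \<in> win n t s" using w i S by auto
          moreover have "odd (card {j\<in>S. i \<in> gset n t j})" using blk[OF S(1) i(1), of i] i S tQ by auto
          ultimately show ?thesis by blast
        next
          case noL: False
          show ?thesis
          proof (cases "Q \<le> s")
            case True
            define m where "m = n - s"
            have m: "1 \<le> m" "m \<le> r" using s True nQ unfolding m_def by auto
            have S1: "S \<subseteq> {t-m+1..t}"
            proof
              fix i assume i: "i \<in> S"
              then have "i \<le> t" "\<not> i \<le> s + t - n" using S noL by auto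
              then show "i \<in> {t-m+1..t}" using False unfolding m_def by auto
            qed
            obtain y where y: "y \<in> {r-m+1..r}" "odd (card {j\<in>S. Q + y \<in> gset n t j})"
              using tail[OF IHb[OF m] _ _ _ S1 S(2)] m rt by auto
            have "Q + y \<in> win n t s" using y w m nQ unfolding m_def by auto
            then show ?thesis using y by blast
          next
            case sQ2: False
            define b where "b = s + t - n"
            show ?thesis
            proof (cases "\<exists>i\<in>S. b + r < i")
              case True
              then obtain i where i: "i \<in> S" "b + r < i" by blast
              have "Q - t + i \<in> win n t s" using w i S sQ2 nQ tQ unfolding b_def by auto
              then show ?thesis using blk2[OF S(1) i(1)] by blast
            next
              case False
              have S1: "S \<subseteq> {b+1..b+r}"
              proof
                fix i assume i: "i \<in> S"
                then have "\<not> b + r < i" "\<not> i \<le> s + t - n" using False noL by auto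
                then show "i \<in> {b+1..b+r}" unfolding b_def by auto
              qed
              have rpos: "0 < r" using S1 S(2) by auto
              have br: "b + r \<le> t" using sQ2 nQ \<open>\<not> s + t \<le> n\<close> unfolding b_def by auto
              obtain y where y: "y \<in> {1..r}" "odd (card {j\<in>S. Q + y \<in> gset n t j})"
                using tail[OF IHw[OF rpos br] _ _ _ S1 S(2)] br by auto
              have "Q + y \<in> win n t s" using y w sQ2 nQ by auto
              then show ?thesis using y by blast
            qed
          qed
        qed
      qed
    qed
  qed
  have B: "indep (\<lambda>i x. x \<in> gset n t i) {t-m+1..t} {n-m+1..n}" if m: "1 \<le> m" "m \<le> t" for m
    unfolding indep_def
  proof (intro allI impI)
    fix S assume S: "S \<subseteq> {t-m+1..t}" "S \<noteq> {}"
    have S0: "S \<subseteq> {1..t}" using S(1) by auto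
    show "\<exists>x\<in>{n-m+1..n}. odd (card {i\<in>S. x \<in> gset n t i})"
    proof (cases "m \<le> r")
      case True
      obtain y where y: "y \<in> {r-m+1..r}" "odd (card {j\<in>S. Q + y \<in> gset n t j})"
        using tail[OF IHb[OF m(1) True] _ _ _ S] True m rt by auto
      have "Q + y \<in> {n-m+1..n}" using y nQ True by auto
      then show ?thesis using y by blast
    next
      case mr: False
      show ?thesis
      proof (cases "\<exists>i\<in>S. t - m + r < i")
        case True
        then obtain i where i: "i \<in> S" "t - m + r < i" by blast
        have "i \<le> t" using i S by auto
        then have "Q - t + i \<in> {n-m+1..n}" using i nQ tQ m by auto
        then show ?thesis using blk2[OF S0 i(1)] by blast
      next
        case False
        have S1: "S \<subseteq> {(t-m)+1..(t-m)+r}"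
        proof
          fix i assume i: "i \<in> S"
          then have "\<not> t - m + r < i" "t - m + 1 \<le> i" using False S by auto
          then show "i \<in> {(t-m)+1..(t-m)+r}" by auto
        qed
        have rpos: "0 < r" using S1 S(2) by auto
        have br: "(t - m) + r \<le> t" using mr m by auto
        obtain y where y: "y \<in> {1..r}" "odd (card {j\<in>S. Q + y \<in> gset n t j})"
          using tail[OF IHw[OF rpos br] _ _ _ S1 S(2)] br by auto
        have "Q + y \<in> {n-m+1..n}" using y nQ mr by auto
        then show ?thesis using y by blast
      qed
    qed
  qed
  show ?case unfolding Inv_def using W B by blast
qed

definition Xs :: "nat \<Rightarrow> nat \<Rightarrow> nat set \<Rightarrow> nat set" where
  "Xs n t S = {x. odd (card {i\<in>S. x \<in> gset n t i})}"

lemma Xs_phi: "Xs n t S = phi (\<lambda>i x. x \<in> gset n t i) UNIV S"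
  unfolding Xs_def phi_def by simp

lemma Xs_empty: "Xs n t {} = {}" unfolding Xs_def by simp

lemma Xs_single: "Xs n t {i} = gset n t i"
proof -
  have "\<And>x. {j\<in>{i}. x \<in> gset n t j} = (if x \<in> gset n t i then {i} else {})" by auto
  then show ?thesis unfolding Xs_def by auto
qed

lemma Xs_symdiff: "finite S1 \<Longrightarrow> finite S2 \<Longrightarrow>
    Xs n t ((S1 - S2) \<union> (S2 - S1)) = (Xs n t S1 - Xs n t S2) \<union> (Xs n t S2 - Xs n t S1)"
  unfolding Xs_phi by (rule phi_symdiff)

lemma PG_inv: assumes "h \<subseteq> {1..n}" shows "inv\<^bsub>PG n\<^esub> h = h"
  unfolding m_inv_def PG_def
proof (rule the_equality)
  show "h \<in> carrier \<lparr>carrier = Pow {1..n}, mult = \<lambda>A B. A - B \<union> (B - A), one = {}\<rparr> \<and>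
    h \<otimes>\<^bsub>\<lparr>carrier = Pow {1..n}, mult = \<lambda>A B. A - B \<union> (B - A), one = {}\<rparr>\<^esub> h = \<one>\<^bsub>\<lparr>carrier = Pow {1..n}, mult = \<lambda>A B. A - B \<union> (B - A), one = {}\<rparr>\<^esub> \<and>
    h \<otimes>\<^bsub>\<lparr>carrier = Pow {1..n}, mult = \<lambda>A B. A - B \<union> (B - A), one = {}\<rparr>\<^esub> h = \<one>\<^bsub>\<lparr>carrier = Pow {1..n}, mult = \<lambda>A B. A - B \<union> (B - A), one = {}\<rparr>\<^esub>"
    using assms by simp
next
  fix y assume "y \<in> carrier \<lparr>carrier = Pow {1..n}, mult = \<lambda>A B. A - B \<union> (B - A), one = {}\<rparr> \<and>
    h \<otimes>\<^bsub>\<lparr>carrier = Pow {1..n}, mult = \<lambda>A B. A - B \<union> (B - A), one = {}\<rparr>\<^esub> y = \<one>\<^bsub>\<lparr>carrier = Pow {1..n}, mult = \<lambda>A B. A - B \<union> (B - A), one = {}\<rparr>\<^esub> \<and>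
    y \<otimes>\<^bsub>\<lparr>carrier = Pow {1..n}, mult = \<lambda>A B. A - B \<union> (B - A), one = {}\<rparr>\<^esub> h = \<one>\<^bsub>\<lparr>carrier = Pow {1..n}, mult = \<lambda>A B. A - B \<union> (B - A), one = {}\<rparr>\<^esub>"
  then have "h - y \<union> (y - h) = {}" by simp
  then show "y = h" by blast
qed

lemma Gnt_eq: assumes "0 < t" shows "Gnt n t = Xs n t ` Pow {1..t}"
proof
  show "Gnt n t \<subseteq> Xs n t ` Pow {1..t}"
  proof
    fix A assume "A \<in> Gnt n t"
    then show "A \<in> Xs n t ` Pow {1..t}" unfolding Gnt_def
    proof (induction rule: generate.induct)
      case one
      have "\<one>\<^bsub>PG n\<^esub> = Xs n t {}" by (simp add: PG_def Xs_empty)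
      then show ?case by blast
    next
      case (incl h)
      then obtain i where i: "i \<in> {1..t}" "h = gset n t i" by blast
      then have "h = Xs n t {i}" by (simp add: Xs_single)
      then show ?case using i by blast
    next
      case (inv h)
      then obtain i where i: "i \<in> {1..t}" "h = gset n t i" by blast
      then have "h \<subseteq> {1..n}" using gset_sub[OF assms] by auto
      then have "inv\<^bsub>PG n\<^esub> h = Xs n t {i}" using i by (simp add: PG_inv Xs_single)
      then show ?case using i by blast
    next
      case (eng h1 h2)
      then obtain S1 S2 where S: "S1 \<subseteq> {1..t}" "S2 \<subseteq> {1..t}" "h1 = Xs n t S1" "h2 = Xs n t S2" by blast
      have f: "finite S1" "finite S2" using S finite_subset by auto
      have "h1 \<otimes>\<^bsub>PG n\<^esub> h2 = Xs n t ((S1 - S2) \<union> (S2 - S1))"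
        using Xs_symdiff[OF f, of n t] S by (simp add: PG_def)
      moreover have "(S1 - S2) \<union> (S2 - S1) \<in> Pow {1..t}" using S by auto
      ultimately show ?case by blast
    qed
  qed
next
  show "Xs n t ` Pow {1..t} \<subseteq> Gnt n t"
  proof
    fix A assume "A \<in> Xs n t ` Pow {1..t}"
    then obtain S where S: "S \<subseteq> {1..t}" "A = Xs n t S" by blast
    have "finite S" using S finite_subset by auto
    from this S(1) have "Xs n t S \<in> Gnt n t"
    proof (induction rule: finite_subset_induct)
      case empty
      have "\<one>\<^bsub>PG n\<^esub> \<in> Gnt n t" unfolding Gnt_def by (rule generate.one)
      then show ?case by (simp add: PG_def Xs_empty)
    next
      case (insert a F)
      have g: "gset n t a \<in> Gnt n t" unfolding Gnt_def using insert by (auto intro: generate.incl)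
      have "gset n t a \<otimes>\<^bsub>PG n\<^esub> Xs n t F \<in> Gnt n t" unfolding Gnt_def
        using g insert(4) unfolding Gnt_def by (rule generate.eng)
      moreover have "gset n t a \<otimes>\<^bsub>PG n\<^esub> Xs n t F = Xs n t (insert a F)"
      proof -
        have "({a} - F) \<union> (F - {a}) = insert a F" using insert by auto
        then show ?thesis using Xs_symdiff[of "{a}" F n t] insert by (simp add: PG_def Xs_single)
      qed
      ultimately show ?case by simp
    qed
    then show "A \<in> Gnt n t" using S by simp
  qed
qed

lemma Xs_low: assumes "0 < t" "t \<le> n" "S \<subseteq> {1..t}" shows "Xs n t S \<inter> {1..t} = S"
proof -
  have "\<And>x. x \<in> {1..t} \<Longrightarrow> {i\<in>S. x \<in> gset n t i} = {i\<in>S. i = x}"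
  proof -
    fix x assume x: "x \<in> {1..t}"
    have "t \<le> n div t * t" by (rule Q_ge[OF assms(1,2)])
    moreover have "x \<le> t" using x by simp
    ultimately have "x \<le> n div t * t" by (rule le_trans[rotated])
    have "\<And>i. i \<in> S \<Longrightarrow> x \<in> gset n t i \<longleftrightarrow> i = x"
    proof -
      fix i assume i: "i \<in> S"
      have i1: "1 \<le> i" "i \<le> t" using i assms by auto
      have "x \<in> gset n t i \<longleftrightarrow> x mod t = i mod t" using rec_low[OF assms(1) i1] x \<open>x \<le> n div t * t\<close> by auto
      also have "\<dots> \<longleftrightarrow> i = x" using mod_uniq[OF assms(1) i1, of x] x by auto
      finally show "x \<in> gset n t i \<longleftrightarrow> i = x" .
    qed
    then show "{i\<in>S. x \<in> gset n t i} = {i\<in>S. i = x}" by auto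
  qed
  moreover have "\<And>x. {i\<in>S. i = x} = (if x \<in> S then {x} else {})" by auto
  ultimately have "\<And>x. x \<in> {1..t} \<Longrightarrow> x \<in> Xs n t S \<longleftrightarrow> x \<in> S"
    unfolding Xs_def by simp
  then show ?thesis using assms(3) by auto
qed

lemma win_ctrans: assumes "0 < t" "t \<le> n" "x \<in> win n t (nat (s mod int n))"
  shows "x \<in> ctrans n t s"
proof -
  define s0 where "s0 = nat (s mod int n)"
  have s0: "int s0 = s mod int n" "s0 < n" using assms unfolding s0_def by (simp_all add: nat_less_iff)
  have x: "1 \<le> x" "x \<le> n" using assms s0 unfolding win_def s0_def[symmetric] by (auto split: if_splits)
  obtain j where j: "j \<in> {1..t}" "int s0 + int j = int x \<or> int s0 + int j = int x + int n"
  proof (cases "s0 < x")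
    case True
    have "x - s0 \<in> {1..t}" using True assms s0 x unfolding win_def s0_def[symmetric] by (auto split: if_splits)
    then show ?thesis using that[of "x - s0"] True by auto
  next
    case False
    have "x + n - s0 \<in> {1..t}" using False assms s0 x unfolding win_def s0_def[symmetric] by (auto split: if_splits)
    then show ?thesis using that[of "x + n - s0"] False s0 by auto
  qed
  have "(s + int j) mod int n = (int s0 + int j) mod int n" using s0 by (simp add: mod_add_left_eq)
  also have "\<dots> = int x mod int n" using j(2) by auto
  finally have "lpr (s + int j) (int n) = int x" using lpr_eq[of "int n" "int x" "s + int j"] x assms by simp
  then have "nat (lpr (s + int j) (int n)) = x" by simp
  then show ?thesis unfolding ctrans_def using j(1) by (metis image_eqI)
qed

theorem lemma3:
  fixes n t :: nat
  assumes "0 < t" and "t \<le> n"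
  shows "card (Gnt n t) = 2 ^ t \<and>
    (\<forall>A \<in> Gnt n t. A \<noteq> {} \<longrightarrow> (\<forall>s::int. A \<inter> ctrans n t s \<noteq> {}))"
proof
  have inj: "inj_on (Xs n t) (Pow {1..t})"
    by (rule inj_onI) (metis PowD Xs_low[OF assms])
  show "card (Gnt n t) = 2 ^ t" unfolding Gnt_eq[OF assms(1)] card_image[OF inj] by (simp add: card_Pow)
  show "\<forall>A \<in> Gnt n t. A \<noteq> {} \<longrightarrow> (\<forall>s::int. A \<inter> ctrans n t s \<noteq> {})"
  proof (intro ballI impI allI)
    fix A s assume A: "A \<in> Gnt n t" "A \<noteq> {}"
    then obtain S where S: "S \<subseteq> {1..t}" "A = Xs n t S" unfolding Gnt_eq[OF assms(1)] by blast
    have "S \<noteq> {}" using A S Xs_empty by auto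
    have "nat (s mod int n) < n" using assms by (simp add: nat_less_iff)
    then have "indep (\<lambda>i x. x \<in> gset n t i) {1..t} (win n t (nat (s mod int n)))"
      using main[OF assms] unfolding Inv_def by blast
    then obtain x where x: "x \<in> win n t (nat (s mod int n))" "odd (card {i\<in>S. x \<in> gset n t i})"
      using S \<open>S \<noteq> {}\<close> unfolding indep_def by blast
    have "x \<in> A" using x S unfolding Xs_def by simp
    moreover have "x \<in> ctrans n t s" using win_ctrans[OF assms x(1)] .
    ultimately show "A \<inter> ctrans n t s \<noteq> {}" by blast
  qed
qed

end
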